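(* Let $X\in\mathbb{R}^{n\times p}$ have columns of Euclidean norm $\sqrt n$, let $\sigma^*>0$ and let $E\in\mathbb{R}^{n\times q}$ have i.i.d. $\mathcal N(0,{\sigma^*}^2)$ entries. Let $A>\sqrt2$ and $\lambda=\frac{2\sqrt2}{\sqrt{nq}}\big(1+A\sqrt{(\log p)/q}\big)$, and let $$\mathcal A_1=\Big\{\frac{\|X^\top E\|_{2,\infty}}{\sqrt{nq}\|E\|_F}\le\frac\lambda2\Big\}\cap\Big\{\frac{\sigma^*}{\sqrt2}<\frac{\|E\|_F}{\sqrt{nq}}<2\sigma^*\Big\}.$$ Then $\mathbb P(\mathcal A_1)\ge1-p^{1-A^2/2}-(1+e^2)e^{-nq/24}$.
   Context: $\|M\|_{2,\infty}$ is the maximum of the Euclidean norms of the rows of $M$; $\|\cdot\|_F$ is the Frobenius norm. *)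

theory Defs
  imports "HOL-Probability.Probability"
begin

definition gauss_matrix :: "nat \<Rightarrow> nat \<Rightarrow> real \<Rightarrow> (nat \<times> nat \<Rightarrow> real) measure" where
  "gauss_matrix n q \<sigma> = PiM ({..<n} \<times> {..<q}) (\<lambda>_. density lborel (normal_density 0 \<sigma>))"

definition fro_norm :: "nat \<Rightarrow> nat \<Rightarrow> (nat \<times> nat \<Rightarrow> real) \<Rightarrow> real" where
  "fro_norm n q E = sqrt (\<Sum>i<n. \<Sum>k<q. (E (i,k))\<^sup>2)"

definition XtE :: "nat \<Rightarrow> (nat \<Rightarrow> nat \<Rightarrow> real) \<Rightarrow> (nat \<times> nat \<Rightarrow> real) \<Rightarrow> nat \<Rightarrow> nat \<Rightarrow> real" where
  "XtE n X E j k = (\<Sum>i<n. X i j * E (i,k))"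

definition norm_2inf :: "nat \<Rightarrow> nat \<Rightarrow> (nat \<Rightarrow> nat \<Rightarrow> real) \<Rightarrow> real" where
  "norm_2inf m q M = Max ((\<lambda>j. sqrt (\<Sum>k<q. (M j k)\<^sup>2)) ` {..<m})"

end

theory Submission
  imports Defs
begin

lemma normal_mass:
  assumes "s > 0"
  shows "(\<integral>\<^sup>+x. ennreal (normal_density m s x) \<partial>lborel) = 1"
proof -
  interpret prob_space "density lborel (normal_density m s)" by (rule prob_space_normal_density) (rule assms)
  have "emeasure (density lborel (normal_density m s)) UNIV = 1" using emeasure_space_1 by simp
  then show ?thesis by (simp add: emeasure_density)
qed

lemma gauss_mgf_lin:
  assumes s: "s > 0"
  shows "(\<integral>\<^sup>+z. ennreal (exp (t*z)) \<partial>(density lborel (normal_density 0 s))) = ennreal (exp (t^2 * s^2/2))"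
proof -
  have pw: "normal_density 0 s z * exp (t*z) = exp (t^2 * s^2/2) * normal_density (t * s^2) s z" for z
  proof -
    have "-(z - 0)\<^sup>2 / (2 * s\<^sup>2) + t*z = t^2 * s^2/2 + (-(z - t * s^2)\<^sup>2 / (2 * s\<^sup>2))"
      using s by (simp add: field_simps power2_eq_square)
    then have "exp (-(z - 0)\<^sup>2 / (2 * s\<^sup>2)) * exp (t*z) = exp (t^2 * s^2/2) * exp (-(z - t * s^2)\<^sup>2 / (2 * s\<^sup>2))"
      by (metis exp_add)
    then show ?thesis unfolding normal_density_def by (simp add: ac_simps)
  qed
  have "(\<integral>\<^sup>+z. ennreal (exp (t*z)) \<partial>(density lborel (normal_density 0 s)))
      = (\<integral>\<^sup>+z. ennreal (normal_density 0 s z) * ennreal (exp (t*z)) \<partial>lborel)"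
    by (subst nn_integral_density) auto
  also have "\<dots> = (\<integral>\<^sup>+z. ennreal (exp (t^2 * s^2/2)) * ennreal (normal_density (t * s^2) s z) \<partial>lborel)"
    by (intro nn_integral_cong) (simp add: pw ennreal_mult'[symmetric] normal_density_nonneg)
  also have "\<dots> = ennreal (exp (t^2 * s^2/2))"
    by (subst nn_integral_cmult) (auto simp: normal_mass s)
  finally show ?thesis .
qed

lemma gauss_mgf_sq:
  assumes s: "s > 0" and a: "a * s^2 < 1/2"
  shows "(\<integral>\<^sup>+z. ennreal (exp (a*z^2)) \<partial>(density lborel (normal_density 0 s))) = ennreal (1 / sqrt (1 - 2*a * s^2))"
proof -
  define r where "r = sqrt (1 - 2*a * s^2)"
  have r: "r > 0" "r^2 = 1 - 2*a * s^2" using a by (auto simp: r_def)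
  define s' where "s' = s / r"
  have s': "s' > 0" using s r by (simp add: s'_def)
  have pw: "normal_density 0 s z * exp (a*z^2) = (1/r) * normal_density 0 s' z" for z
  proof -
    have s'2: "s'^2 = s^2 / (1 - 2*a * s^2)" unfolding s'_def using r by (simp add: power_divide)
    have ne: "1 - 2*a * s^2 \<noteq> 0" using a by simp
    have e: "-(z - 0)\<^sup>2 / (2 * s\<^sup>2) + a*z^2 = (-(z - 0)\<^sup>2 / (2 * s'\<^sup>2))"
      unfolding s'2 using s ne by (simp add: field_simps power2_eq_square)
    have c: "1 / sqrt (2 * pi * s'\<^sup>2) = r * (1 / sqrt (2 * pi * s\<^sup>2))"
      using s r unfolding s'_def by (simp add: real_sqrt_mult power_divide real_sqrt_divide field_simps)
    have "normal_density 0 s z * exp (a*z^2) = 1 / sqrt (2 * pi * s\<^sup>2) * (exp (-(z - 0)\<^sup>2 / (2 * s\<^sup>2)) * exp (a*z^2))"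
      unfolding normal_density_def by simp
    also have "\<dots> = 1 / sqrt (2 * pi * s\<^sup>2) * exp (-(z - 0)\<^sup>2 / (2 * s'\<^sup>2))"
      by (metis e exp_add)
    also have "\<dots> = (1/r) * normal_density 0 s' z"
      unfolding normal_density_def c using r by simp
    finally show ?thesis .
  qed
  have "(\<integral>\<^sup>+z. ennreal (exp (a*z^2)) \<partial>(density lborel (normal_density 0 s)))
      = (\<integral>\<^sup>+z. ennreal (normal_density 0 s z) * ennreal (exp (a*z^2)) \<partial>lborel)"
    by (subst nn_integral_density) auto
  also have "\<dots> = (\<integral>\<^sup>+z. ennreal (1/r) * ennreal (normal_density 0 s' z) \<partial>lborel)"
  proof (intro nn_integral_cong)
    fix z
    have "ennreal (normal_density 0 s z) * ennreal (exp (a*z^2)) = ennreal (normal_density 0 s z * exp (a*z^2))"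
      by (simp add: ennreal_mult' normal_density_nonneg)
    also have "\<dots> = ennreal ((1/r) * normal_density 0 s' z)" by (simp only: pw)
    also have "\<dots> = ennreal (1/r) * ennreal (normal_density 0 s' z)"
      using r by (intro ennreal_mult) (auto simp: normal_density_nonneg)
    finally show "ennreal (normal_density 0 s z) * ennreal (exp (a*z^2)) = ennreal (1/r) * ennreal (normal_density 0 s' z)" .
  qed
  also have "\<dots> = ennreal (1/r)"
    by (subst nn_integral_cmult) (auto simp: normal_mass s')
  finally show ?thesis by (simp add: r_def)
qed


lemma sf_normal: "s > 0 \<Longrightarrow> sigma_finite_measure (density lborel (normal_density 0 s))"
  using prob_space_normal_density[of s 0] prob_space_imp_sigma_finite by blast

lemma prod_int:
  fixes f :: "'i \<Rightarrow> real \<Rightarrow> real"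
  assumes s: "s > 0" and I: "finite I" and f: "\<And>i. i \<in> I \<Longrightarrow> f i \<in> borel_measurable borel"
    and nn: "\<And>i z. i \<in> I \<Longrightarrow> 0 \<le> f i z"
  shows "(\<integral>\<^sup>+x. ennreal (\<Prod>i\<in>I. f i (x i)) \<partial>PiM I (\<lambda>_. density lborel (normal_density 0 s)))
       = (\<Prod>i\<in>I. \<integral>\<^sup>+z. ennreal (f i z) \<partial>(density lborel (normal_density 0 s)))"
proof -
  interpret product_sigma_finite "\<lambda>_::'i. density lborel (normal_density 0 s)"
    by (simp add: product_sigma_finite_def sf_normal s)
  have "(\<integral>\<^sup>+x. ennreal (\<Prod>i\<in>I. f i (x i)) \<partial>PiM I (\<lambda>_. density lborel (normal_density 0 s)))
      = (\<integral>\<^sup>+x. (\<Prod>i\<in>I. ennreal (f i (x i))) \<partial>PiM I (\<lambda>_. density lborel (normal_density 0 s)))"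
    by (intro nn_integral_cong) (simp add: prod_ennreal nn)
  also have "\<dots> = (\<Prod>i\<in>I. \<integral>\<^sup>+z. ennreal (f i z) \<partial>(density lborel (normal_density 0 s)))"
    by (rule product_nn_integral_prod) (use I f in auto)
  finally show ?thesis .
qed

lemma sum_prod_split: "(\<Sum>ik\<in>A\<times>B. f ik) = (\<Sum>i\<in>A. \<Sum>k\<in>B. f (i,k))"
  by (simp add: sum.cartesian_product)

lemma fro_sq: "(fro_norm n q E)^2 = (\<Sum>ik\<in>{..<n}\<times>{..<q}. (E ik)^2)"
  unfolding fro_norm_def by (simp add: sum.cartesian_product sum_nonneg)

lemma meas_comp:
  assumes "ik \<in> I"
  shows "(\<lambda>E. E ik) \<in> borel_measurable (PiM I (\<lambda>_. density lborel (normal_density 0 s)))"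
  using measurable_component_singleton[OF assms, of "\<lambda>_. density lborel (normal_density 0 s)"] by simp

lemma mgf_fro:
  assumes s: "s > 0" and a: "a * s^2 < 1/2"
  shows "(\<integral>\<^sup>+E. ennreal (exp (a * (fro_norm n q E)^2)) \<partial>gauss_matrix n q s)
       = ennreal ((1 / sqrt (1 - 2*a * s^2)) ^ (n*q))"
proof -
  let ?I = "{..<n}\<times>{..<q}"
  have "(\<integral>\<^sup>+E. ennreal (exp (a * (fro_norm n q E)^2)) \<partial>gauss_matrix n q s)
     = (\<integral>\<^sup>+E. ennreal (\<Prod>ik\<in>?I. exp (a * (E ik)^2)) \<partial>gauss_matrix n q s)"
    by (intro nn_integral_cong) (simp add: fro_sq sum_distrib_left exp_sum)
  also have "\<dots> = (\<Prod>ik\<in>?I. \<integral>\<^sup>+z. ennreal (exp (a * z^2)) \<partial>(density lborel (normal_density 0 s)))"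
    unfolding gauss_matrix_def by (rule prod_int[OF s]) auto
  also have "\<dots> = (\<Prod>ik\<in>?I. ennreal (1 / sqrt (1 - 2*a * s^2)))"
    using gauss_mgf_sq[OF s a] by simp
  also have "\<dots> = ennreal ((1 / sqrt (1 - 2*a * s^2)) ^ (n*q))"
  proof -
    have pos: "0 \<le> 1 / sqrt (1 - 2*a * s^2)" using a by simp
    show ?thesis by (simp add: card_cartesian_product ennreal_power[OF pos])
  qed
  finally show ?thesis .
qed


lemma mgf_row:
  fixes x :: "nat \<Rightarrow> real"
  assumes s: "s > 0" and mu: "\<mu> \<ge> 0" and r: "r = (\<Sum>i<n. (x i)^2)" and lt: "2 * \<mu> * r * s^2 < 1"
  shows "(\<integral>\<^sup>+E. ennreal (exp (\<mu> * (\<Sum>k<q. (\<Sum>i<n. x i * E (i,k))^2))) \<partial>gauss_matrix n q s)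
       = ennreal ((1 / sqrt (1 - 2 * (\<mu> * r) * s^2)) ^ q)"
proof -
  define N where "N = density lborel (normal_density 0 s)"
  define M where "M = gauss_matrix n q s"
  define Q where "Q = PiM {..<q} (\<lambda>_. N)"
  define c where "c = sqrt (2 * \<mu>) / s"
  define Y where "Y = (\<lambda>(k::nat) (E::nat\<times>nat\<Rightarrow>real). \<Sum>i<n. x i * E (i,k))"
  define G where "G = (\<lambda>(E::nat\<times>nat\<Rightarrow>real) (Z::nat\<Rightarrow>real). ennreal (\<Prod>k<q. exp ((c * Y k E) * Z k)))"
  have M_def': "M = PiM ({..<n}\<times>{..<q}) (\<lambda>_. N)" unfolding M_def N_def gauss_matrix_def ..
  have cc: "c^2 * s^2 / 2 = \<mu>" using s mu unfolding c_def by (simp add: power_divide)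
  have pM: "prob_space M" unfolding M_def' N_def
    by (rule prob_space_PiM) (rule prob_space_normal_density, rule s)
  have pQ: "prob_space Q" unfolding Q_def N_def
    by (rule prob_space_PiM) (rule prob_space_normal_density, rule s)
  interpret pair_sigma_finite M Q
    using pM pQ by (simp add: pair_sigma_finite_def prob_space_imp_sigma_finite)
  have a: "ennreal (exp (\<mu> * (\<Sum>k<q. (Y k E)^2))) = (\<integral>\<^sup>+Z. G E Z \<partial>Q)" for E
  proof -
    have "(\<integral>\<^sup>+Z. G E Z \<partial>Q) = (\<Prod>k<q. \<integral>\<^sup>+z. ennreal (exp ((c * Y k E) * z)) \<partial>N)"
      unfolding G_def Q_def N_def by (rule prod_int[OF s]) auto
    also have "\<dots> = (\<Prod>k<q. ennreal (exp ((c * Y k E)^2 * s^2 / 2)))"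
      unfolding N_def by (simp add: gauss_mgf_lin[OF s])
    also have "\<dots> = ennreal (\<Prod>k<q. exp (\<mu> * (Y k E)^2))"
      by (subst prod_ennreal) (auto simp: power_mult_distrib simp flip: cc intro!: prod.cong arg_cong[where f=ennreal] arg_cong[where f=exp])
    also have "\<dots> = ennreal (exp (\<mu> * (\<Sum>k<q. (Y k E)^2)))"
      by (simp add: exp_sum sum_distrib_left)
    finally show ?thesis by simp
  qed
  have m1: "(\<lambda>p. fst p (i,k)) \<in> borel_measurable (M \<Otimes>\<^sub>M Q)" if "i < n" "k < q" for i k
    using measurable_compose[OF measurable_fst meas_comp[of "(i,k)" "{..<n}\<times>{..<q}" s]] that
    unfolding M_def' N_def by simp
  have m2: "(\<lambda>p. snd p k) \<in> borel_measurable (M \<Otimes>\<^sub>M Q)" if "k < q" for k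
    using measurable_compose[OF measurable_snd meas_comp[of k "{..<q}" s]] that
    unfolding Q_def N_def by simp
  have mG: "case_prod G \<in> borel_measurable (M \<Otimes>\<^sub>M Q)"
    unfolding G_def Y_def split_beta'
    by (intro measurable_compose[OF _ measurable_ennreal] borel_measurable_prod
          borel_measurable_times borel_measurable_sum borel_measurable_const
          measurable_compose[OF _ borel_measurable_exp] m1 m2) auto
  have "(\<integral>\<^sup>+E. ennreal (exp (\<mu> * (\<Sum>k<q. (\<Sum>i<n. x i * E (i,k))^2))) \<partial>M)
      = (\<integral>\<^sup>+E. \<integral>\<^sup>+Z. G E Z \<partial>Q \<partial>M)"
    using a unfolding Y_def by simp
  also have "\<dots> = (\<integral>\<^sup>+Z. \<integral>\<^sup>+E. G E Z \<partial>M \<partial>Q)"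
    by (rule Fubini'[OF mG, symmetric])
  also have "\<dots> = (\<integral>\<^sup>+Z. ennreal (\<Prod>k<q. exp ((\<mu> * r) * (Z k)^2)) \<partial>Q)"
  proof (intro nn_integral_cong)
    fix Z :: "nat \<Rightarrow> real"
    have "(\<integral>\<^sup>+E. G E Z \<partial>M) = (\<integral>\<^sup>+E. ennreal (\<Prod>ik\<in>{..<n}\<times>{..<q}. exp ((c * Z (snd ik) * x (fst ik)) * E ik)) \<partial>M)"
    proof (intro nn_integral_cong)
      fix E :: "nat \<times> nat \<Rightarrow> real"
      have "(\<Prod>k<q. exp ((c * Y k E) * Z k)) = exp (\<Sum>k<q. (c * Y k E) * Z k)" by (simp add: exp_sum)
      also have "(\<Sum>k<q. (c * Y k E) * Z k) = (\<Sum>ik\<in>{..<n}\<times>{..<q}. (c * Z (snd ik) * x (fst ik)) * E ik)"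
        unfolding Y_def sum_prod_split
        by (subst sum.swap) (simp add: sum_distrib_left sum_distrib_right ac_simps)
      finally show "G E Z = ennreal (\<Prod>ik\<in>{..<n}\<times>{..<q}. exp ((c * Z (snd ik) * x (fst ik)) * E ik))"
        unfolding G_def by (simp add: exp_sum)
    qed
    also have "\<dots> = (\<Prod>ik\<in>{..<n}\<times>{..<q}. \<integral>\<^sup>+z. ennreal (exp ((c * Z (snd ik) * x (fst ik)) * z)) \<partial>N)"
      unfolding M_def' N_def by (rule prod_int[OF s]) auto
    also have "\<dots> = (\<Prod>ik\<in>{..<n}\<times>{..<q}. ennreal (exp (\<mu> * (x (fst ik))^2 * (Z (snd ik))^2)))"
      unfolding N_def gauss_mgf_lin[OF s]
      by (intro prod.cong refl arg_cong[where f=ennreal] arg_cong[where f=exp]) (simp add: power_mult_distrib flip: cc)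
    also have "\<dots> = ennreal (exp (\<Sum>ik\<in>{..<n}\<times>{..<q}. \<mu> * (x (fst ik))^2 * (Z (snd ik))^2))"
      by (simp add: prod_ennreal exp_sum)
    also have "(\<Sum>ik\<in>{..<n}\<times>{..<q}. \<mu> * (x (fst ik))^2 * (Z (snd ik))^2) = (\<Sum>k<q. (\<mu> * r) * (Z k)^2)"
      unfolding sum_prod_split r
      by (subst sum.swap) (simp add: sum_distrib_left sum_distrib_right ac_simps)
    finally show "(\<integral>\<^sup>+E. G E Z \<partial>M) = ennreal (\<Prod>k<q. exp ((\<mu> * r) * (Z k)^2))"
      by (simp add: exp_sum)
  qed
  also have "\<dots> = (\<Prod>k<q. \<integral>\<^sup>+z. ennreal (exp ((\<mu> * r) * z^2)) \<partial>N)"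
    unfolding Q_def N_def by (rule prod_int[OF s]) auto
  also have "\<dots> = (\<Prod>k<q. ennreal (1 / sqrt (1 - 2 * (\<mu> * r) * s^2)))"
    using lt unfolding N_def by (subst gauss_mgf_sq[OF s]) (auto simp: algebra_simps)
  also have "\<dots> = ennreal ((1 / sqrt (1 - 2 * (\<mu> * r) * s^2)) ^ q)"
  proof -
    have pos: "0 \<le> 1 / sqrt (1 - 2 * (\<mu> * r) * s^2)" using lt by (simp add: algebra_simps)
    show ?thesis by (simp add: ennreal_power[OF pos])
  qed
  finally show ?thesis unfolding M_def .
qed


lemma chernoff:
  assumes S: "S \<in> sets M" and b: "\<And>x. x \<in> S \<Longrightarrow> b \<le> g x" and g: "g \<in> borel_measurable M"
  shows "emeasure M S \<le> ennreal (exp (-b)) * (\<integral>\<^sup>+x. ennreal (exp (g x)) \<partial>M)"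
proof -
  have "emeasure M S = (\<integral>\<^sup>+x. indicator S x \<partial>M)" using S by simp
  also have "\<dots> \<le> (\<integral>\<^sup>+x. ennreal (exp (-b)) * ennreal (exp (g x)) \<partial>M)"
  proof (intro nn_integral_mono)
    fix x
    show "indicator S x \<le> ennreal (exp (-b)) * ennreal (exp (g x))"
    proof (cases "x \<in> S")
      case True
      then have "1 \<le> exp (-b) * exp (g x)" using b[OF True] by (simp flip: exp_add)
      then have "ennreal 1 \<le> ennreal (exp (-b) * exp (g x))" by (rule ennreal_leI)
      then show ?thesis using True by (simp add: ennreal_mult')
    qed simp
  qed
  also have "\<dots> = ennreal (exp (-b)) * (\<integral>\<^sup>+x. ennreal (exp (g x)) \<partial>M)"
    using g by (subst nn_integral_cmult) auto
  finally show ?thesis .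
qed

lemma meas_fro: "fro_norm n q \<in> borel_measurable (gauss_matrix n q s)"
proof -
  have "(\<lambda>E. sqrt (\<Sum>i<n. \<Sum>k<q. (E (i,k))\<^sup>2)) \<in> borel_measurable (gauss_matrix n q s)"
    unfolding gauss_matrix_def
    by (intro measurable_compose[OF _ borel_measurable_sqrt] borel_measurable_sum
          borel_measurable_power meas_comp) auto
  then show ?thesis unfolding fro_norm_def[abs_def] .
qed

lemma meas_row: "(\<lambda>E. \<Sum>k<q. (\<Sum>i<n. x i * E (i,k))^2) \<in> borel_measurable (gauss_matrix n q s)"
  unfolding gauss_matrix_def
  by (intro borel_measurable_sum borel_measurable_power borel_measurable_times
        borel_measurable_const meas_comp) auto


lemma exp_7_24: "exp (7/24::real) \<le> 24/17"
proof -
  have "1 + (-7/24::real) \<le> exp (-7/24)" by (rule exp_ge_add_one_self)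
  then have "17/24 \<le> exp (-7/24::real)" by simp
  then have "1 / exp (-7/24::real) \<le> 1 / (17/24)" by (intro divide_left_mono) auto
  then show ?thesis by (simp add: exp_minus field_simps)
qed

lemma tailL:
  assumes s: "s > 0"
  shows "emeasure (gauss_matrix n q s) {E\<in>space (gauss_matrix n q s). (fro_norm n q E)^2 \<le> real (n*q) * s^2/2}
         \<le> ennreal (exp (-(real (n*q))/24))"
proof -
  let ?M = "gauss_matrix n q s"
  let ?a = "-1/(2 * s^2)"
  have a: "?a * s^2 < 1/2" using s by simp
  have "emeasure ?M {E\<in>space ?M. (fro_norm n q E)^2 \<le> real (n*q) * s^2/2}
     \<le> ennreal (exp (-(?a * (real (n*q) * s^2/2)))) * (\<integral>\<^sup>+E. ennreal (exp (?a * (fro_norm n q E)^2)) \<partial>?M)"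
  proof (rule chernoff)
    show "{E\<in>space ?M. (fro_norm n q E)^2 \<le> real (n*q) * s^2/2} \<in> sets ?M"
      using meas_fro[of n q s] by measurable
    show "(\<lambda>E. ?a * (fro_norm n q E)^2) \<in> borel_measurable ?M"
      using meas_fro[of n q s] by measurable
    fix E assume "E \<in> {E\<in>space ?M. (fro_norm n q E)^2 \<le> real (n*q) * s^2/2}"
    then show "?a * (real (n*q) * s^2/2) \<le> ?a * (fro_norm n q E)^2"
      using s by (intro mult_left_mono_neg) auto
  qed
  also have "\<dots> = ennreal (exp (-(?a * (real (n*q) * s^2/2)))) * ennreal ((1 / sqrt (1 - 2 * ?a * s^2)) ^ (n*q))"
    by (simp only: mgf_fro[OF s a])
  also have "\<dots> = ennreal (exp (-(?a * (real (n*q) * s^2/2))) * (1 / sqrt (1 - 2 * ?a * s^2)) ^ (n*q))"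
    using s by (subst ennreal_mult) auto
  also have "\<dots> \<le> ennreal (exp (-(real (n*q))/24))"
  proof (rule ennreal_leI)
    have e1: "exp (-(?a * (real (n*q) * s^2/2))) = exp (1/4) ^ (n*q)"
      using s by (simp add: exp_of_nat_mult[symmetric] field_simps)
    have e2: "1 - 2 * ?a * s^2 = 2" using s by simp
    have e3: "exp (-(real (n*q))/24) = exp (-1/24) ^ (n*q)"
      by (simp add: exp_of_nat_mult[symmetric] field_simps)
    have base: "exp (1/4) * (1 / sqrt 2) \<le> exp (-1/24::real)"
    proof -
      have "exp (7/24::real) ^ 2 \<le> (24/17)^2" using exp_7_24 by (intro power_mono) auto
      also have "\<dots> \<le> (2::real)" by (simp add: power2_eq_square)
      finally have "exp (7/24::real) ^ 2 \<le> 2" .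
      then have "exp (7/24::real) \<le> sqrt 2" by (simp add: real_le_rsqrt)
      moreover have "exp (1/4::real) = exp (7/24) * exp (-1/24)" by (simp flip: exp_add)
      ultimately show ?thesis by (simp add: field_simps)
    qed
    show "exp (-(?a * (real (n*q) * s^2/2))) * (1 / sqrt (1 - 2 * ?a * s^2)) ^ (n*q) \<le> exp (-(real (n*q))/24)"
      unfolding e1 e2 e3 power_mult_distrib[symmetric]
      by (intro power_mono base) auto
  qed
  finally show ?thesis .
qed

lemma tailU:
  assumes s: "s > 0"
  shows "emeasure (gauss_matrix n q s) {E\<in>space (gauss_matrix n q s). 4 * real (n*q) * s^2 \<le> (fro_norm n q E)^2}
         \<le> ennreal (exp (-(real (n*q))/24))"
proof -
  let ?M = "gauss_matrix n q s"
  let ?a = "3/(8 * s^2)"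
  have a: "?a * s^2 < 1/2" using s by simp
  have "emeasure ?M {E\<in>space ?M. 4 * real (n*q) * s^2 \<le> (fro_norm n q E)^2}
     \<le> ennreal (exp (-(?a * (4 * real (n*q) * s^2)))) * (\<integral>\<^sup>+E. ennreal (exp (?a * (fro_norm n q E)^2)) \<partial>?M)"
  proof (rule chernoff)
    show "{E\<in>space ?M. 4 * real (n*q) * s^2 \<le> (fro_norm n q E)^2} \<in> sets ?M"
      using meas_fro[of n q s] by measurable
    show "(\<lambda>E. ?a * (fro_norm n q E)^2) \<in> borel_measurable ?M"
      using meas_fro[of n q s] by measurable
    fix E assume "E \<in> {E\<in>space ?M. 4 * real (n*q) * s^2 \<le> (fro_norm n q E)^2}"
    then show "?a * (4 * real (n*q) * s^2) \<le> ?a * (fro_norm n q E)^2"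
      using s by (intro mult_left_mono) auto
  qed
  also have "\<dots> = ennreal (exp (-(?a * (4 * real (n*q) * s^2)))) * ennreal ((1 / sqrt (1 - 2 * ?a * s^2)) ^ (n*q))"
    by (simp only: mgf_fro[OF s a])
  also have "\<dots> = ennreal (exp (-(?a * (4 * real (n*q) * s^2))) * (1 / sqrt (1 - 2 * ?a * s^2)) ^ (n*q))"
    using s by (subst ennreal_mult) auto
  also have "\<dots> \<le> ennreal (exp (-(real (n*q))/24))"
  proof (rule ennreal_leI)
    have e1: "exp (-(?a * (4 * real (n*q) * s^2))) = exp (-3/2) ^ (n*q)"
      using s by (simp add: exp_of_nat_mult[symmetric] field_simps)
    have e2: "1 / sqrt (1 - 2 * ?a * s^2) = 2" using s by (simp add: real_sqrt_divide)
    have e3: "exp (-(real (n*q))/24) = exp (-1/24) ^ (n*q)"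
      by (simp add: exp_of_nat_mult[symmetric] field_simps)
    have base: "exp (-3/2) * 2 \<le> exp (-1/24::real)"
    proof -
      have "1 + 35/24 \<le> exp (35/24::real)" by (rule exp_ge_add_one_self)
      then have "2 \<le> exp (35/24::real)" by simp
      moreover have "exp (-1/24::real) = exp (-3/2) * exp (35/24)" by (simp flip: exp_add)
      ultimately show ?thesis by simp
    qed
    show "exp (-(?a * (4 * real (n*q) * s^2))) * (1 / sqrt (1 - 2 * ?a * s^2)) ^ (n*q) \<le> exp (-(real (n*q))/24)"
      unfolding e1 e2 e3 power_mult_distrib[symmetric]
      by (intro power_mono base) auto
  qed
  finally show ?thesis .
qed


lemma tailR:
  fixes x :: "nat \<Rightarrow> real"
  assumes s: "s > 0" and q: "q \<ge> 1" and r: "r = (\<Sum>i<n. (x i)^2)" and rpos: "r > 0" and t: "t \<ge> 0"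
  shows "emeasure (gauss_matrix n q s)
           {E\<in>space (gauss_matrix n q s). r * s^2 * (sqrt (real q) + t)^2 \<le> (\<Sum>k<q. (\<Sum>i<n. x i * E (i,k))^2)}
         \<le> ennreal (exp (-(t^2)/2))"
proof -
  let ?M = "gauss_matrix n q s"
  let ?S = "\<lambda>E. (\<Sum>k<q. (\<Sum>i<n. x i * E (i,k))^2)"
  define T where "T = (sqrt (real q) + t)^2"
  have sq: "sqrt (real q) \<ge> 1" using q by simp
  have Tq: "T \<ge> real q" unfolding T_def
  proof -
    have "sqrt (real q) \<le> sqrt (real q) + t" using t by simp
    then have "(sqrt (real q))^2 \<le> (sqrt (real q) + t)^2" by (intro power_mono) auto
    then show "real q \<le> (sqrt (real q) + t)^2" by simp
  qed
  have Tpos: "T > 0" using Tq q by simp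
  define u where "u = (1 - real q / T) / 2"
  define \<mu> where "\<mu> = u / (r * s^2)"
  have u0: "u \<ge> 0" using Tq Tpos unfolding u_def by (simp add: field_simps)
  have mu0: "\<mu> \<ge> 0" using u0 rpos s unfolding \<mu>_def by simp
  have mur: "\<mu> * r * s^2 = u" using rpos s unfolding \<mu>_def by simp
  have lt: "2 * \<mu> * r * s^2 < 1"
  proof -
    have "2 * \<mu> * r * s^2 = 1 - real q / T" using mur unfolding u_def by simp
    moreover have "real q / T > 0" using q Tpos by simp
    ultimately show ?thesis by simp
  qed
  have "emeasure ?M {E\<in>space ?M. r * s^2 * (sqrt (real q) + t)^2 \<le> ?S E}
     \<le> ennreal (exp (-(\<mu> * (r * s^2 * T)))) * (\<integral>\<^sup>+E. ennreal (exp (\<mu> * ?S E)) \<partial>?M)"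
  proof (rule chernoff)
    show "{E\<in>space ?M. r * s^2 * (sqrt (real q) + t)^2 \<le> ?S E} \<in> sets ?M"
      using meas_row[where x=x and q=q and n=n and s=s] by measurable
    show "(\<lambda>E. \<mu> * ?S E) \<in> borel_measurable ?M"
      using meas_row[where x=x and q=q and n=n and s=s] by measurable
    fix E assume "E \<in> {E\<in>space ?M. r * s^2 * (sqrt (real q) + t)^2 \<le> ?S E}"
    then show "\<mu> * (r * s^2 * T) \<le> \<mu> * ?S E"
      unfolding T_def using mu0 by (intro mult_left_mono) auto
  qed
  also have "\<dots> = ennreal (exp (-(\<mu> * (r * s^2 * T)))) * ennreal ((1 / sqrt (1 - 2 * (\<mu> * r) * s^2)) ^ q)"
    by (simp only: mgf_row[OF s mu0 r lt])
  also have "\<dots> = ennreal (exp (-(\<mu> * (r * s^2 * T))) * (1 / sqrt (1 - 2 * (\<mu> * r) * s^2)) ^ q)"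
    using lt by (subst ennreal_mult) (auto simp: algebra_simps)
  also have "\<dots> \<le> ennreal (exp (-(t^2)/2))"
  proof (rule ennreal_leI)
    have b: "\<mu> * (r * s^2 * T) = (T - real q) / 2"
      using mur Tpos unfolding u_def by (simp add: field_simps)
    have c1: "1 - 2 * (\<mu> * r) * s^2 = real q / T"
      using mur unfolding u_def by (simp add: algebra_simps)
    have c2: "1 / sqrt (real q / T) = 1 + t / sqrt (real q)"
    proof -
      have "sqrt T = sqrt (real q) + t" unfolding T_def using t by simp
      then show ?thesis using sq by (simp add: real_sqrt_divide field_simps)
    qed
    have c3: "(1 + t / sqrt (real q)) ^ q \<le> exp (t * sqrt (real q))"
    proof -
      have "(1 + t / sqrt (real q)) ^ q \<le> exp (t / sqrt (real q)) ^ q"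
        using t sq exp_ge_add_one_self[of "t / sqrt (real q)"] by (intro power_mono) auto
      also have "\<dots> = exp (real q * (t / sqrt (real q)))" by (rule exp_of_nat_mult[symmetric])
      also have "real q * (t / sqrt (real q)) = t * sqrt (real q)"
      proof -
        have qq: "real q = sqrt (real q) * sqrt (real q)" by simp
        have "real q * (t / sqrt (real q)) = sqrt (real q) * sqrt (real q) * t / sqrt (real q)"
          by (subst qq) simp
        also have "\<dots> = t * sqrt (real q)"
        proof -
          have gen: "\<And>w::real. w > 0 \<Longrightarrow> w * w * t / w = t * w" by (simp add: field_simps)
          show ?thesis by (rule gen) (use sq in simp)
        qed
        finally show ?thesis .
      qed
      finally show ?thesis .
    qed
    have d: "(T - real q) / 2 = t * sqrt (real q) + t^2/2"
      unfolding T_def by (simp add: power2_eq_square algebra_simps)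
    have "exp (-(\<mu> * (r * s^2 * T))) * (1 / sqrt (1 - 2 * (\<mu> * r) * s^2)) ^ q
        = exp (-(t * sqrt (real q) + t^2/2)) * (1 + t / sqrt (real q)) ^ q"
      unfolding b c1 c2 d ..
    also have "\<dots> \<le> exp (-(t * sqrt (real q) + t^2/2)) * exp (t * sqrt (real q))"
      by (intro mult_left_mono c3) auto
    also have "\<dots> = exp (-(t^2)/2)" by (simp flip: exp_add)
    finally show "exp (-(\<mu> * (r * s^2 * T))) * (1 / sqrt (1 - 2 * (\<mu> * r) * s^2)) ^ q \<le> exp (-(t^2)/2)" .
  qed
  finally show ?thesis .
qed


lemma meas_n2: "(\<lambda>E. norm_2inf p q (XtE n X E)) \<in> borel_measurable (gauss_matrix n q s)"
  unfolding norm_2inf_def XtE_def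
  by (intro borel_measurable_Max measurable_compose[OF _ borel_measurable_sqrt] meas_row) auto

lemma meas_le:
  assumes "prob_space M" "emeasure M S \<le> ennreal c" "c \<ge> 0"
  shows "measure M S \<le> c"
proof -
  interpret prob_space M by fact
  show ?thesis using assms(2,3) by (simp add: emeasure_eq_measure)
qed

lemma alg_id:
  fixes a b s t u :: real
  assumes "a > 0" "b > 0" "s > 0"
  shows "s * a * (b + t) / ((a*b) * (s * (a*b) / u)) = u / (a*b) * (1 + t/b)"
  using assms by (simp add: field_simps)

theorem lemma7:
  fixes X :: "nat \<Rightarrow> nat \<Rightarrow> real" and n p q :: nat and \<sigma> A lam :: real
  assumes "n \<ge> 1" "p \<ge> 1" "q \<ge> 1"
    and cols: "\<forall>j<p. sqrt (\<Sum>i<n. (X i j)\<^sup>2) = sqrt (real n)"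
    and sigma: "\<sigma> > 0"
    and A: "A > sqrt 2"
    and lam_def: "lam = 2 * sqrt 2 / sqrt (real n * real q) * (1 + A * sqrt (ln (real p) / real q))"
  shows "measure (gauss_matrix n q \<sigma>)
           {E \<in> space (gauss_matrix n q \<sigma>).
              norm_2inf p q (XtE n X E) / (sqrt (real n * real q) * fro_norm n q E) \<le> lam / 2
            \<and> \<sigma> / sqrt 2 < fro_norm n q E / sqrt (real n * real q)
            \<and> fro_norm n q E / sqrt (real n * real q) < 2 * \<sigma>}
         \<ge> 1 - real p powr (1 - A\<^sup>2 / 2) - (1 + exp 2) * exp (- (real n * real q) / 24)"
proof -
  note n = assms(1) and p = assms(2) and q = assms(3)
  define M where "M = gauss_matrix n q \<sigma>"
  have pM: "prob_space M" unfolding M_def gauss_matrix_def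
    by (rule prob_space_PiM) (rule prob_space_normal_density, rule sigma)
  interpret P: prob_space M by (rule pM)
  define t where "t = A * sqrt (ln (real p))"
  have A0: "A > 0" using A by (smt (verit) real_sqrt_ge_zero)
  have t0: "t \<ge> 0" unfolding t_def using A0 p by simp
  define TS where "TS = {E \<in> space M.
              norm_2inf p q (XtE n X E) / (sqrt (real n * real q) * fro_norm n q E) \<le> lam / 2
            \<and> \<sigma> / sqrt 2 < fro_norm n q E / sqrt (real n * real q)
            \<and> fro_norm n q E / sqrt (real n * real q) < 2 * \<sigma>}"
  define L where "L = {E\<in>space M. (fro_norm n q E)^2 \<le> real (n*q) * \<sigma>^2/2}"
  define U where "U = {E\<in>space M. 4 * real (n*q) * \<sigma>^2 \<le> (fro_norm n q E)^2}"
  define B where "B = (\<lambda>j. {E\<in>space M. real n * \<sigma>^2 * (sqrt (real q) + t)^2 \<le> (\<Sum>k<q. (\<Sum>i<n. X i j * E (i,k))^2)})"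
  have mf: "fro_norm n q \<in> borel_measurable M" unfolding M_def by (rule meas_fro)
  have mn2: "(\<lambda>E. norm_2inf p q (XtE n X E)) \<in> borel_measurable M" unfolding M_def by (rule meas_n2)
  have TSm: "TS \<in> sets M" unfolding TS_def using mf mn2 by measurable
  have Lm: "L \<in> sets M" unfolding L_def using mf by measurable
  have Um: "U \<in> sets M" unfolding U_def using mf by measurable
  have Bm: "B j \<in> sets M" for j
    unfolding B_def using meas_row[where x="\<lambda>i. X i j" and q=q and n=n and s=\<sigma>] unfolding M_def by measurable
  have colsq: "(\<Sum>i<n. (X i j)^2) = real n" if "j < p" for j
    using cols that by simp
  have mL: "measure M L \<le> exp (-(real (n*q))/24)"
    using meas_le[OF pM[unfolded M_def] tailL[OF sigma, of n q]] unfolding L_def M_def by simp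
  have mU: "measure M U \<le> exp (-(real (n*q))/24)"
    using meas_le[OF pM[unfolded M_def] tailU[OF sigma, of n q]] unfolding U_def M_def by simp
  have mB: "measure M (B j) \<le> exp (-(t^2)/2)" if "j < p" for j
  proof -
    have "real n > 0" using n by simp
    from meas_le[OF pM[unfolded M_def] tailR[OF sigma q colsq[OF that, symmetric] this t0]]
    show ?thesis unfolding B_def M_def by simp
  qed
  define c where "c = sqrt (real n * real q)"
  have c_ab: "c = sqrt (real n) * sqrt (real q)" unfolding c_def by (simp add: real_sqrt_mult)
  have c0: "c > 0" using n q unfolding c_def by simp
  have c2: "c^2 = real n * real q" unfolding c_def by simp
  define K where "K = \<sigma> * sqrt (real n) * (sqrt (real q) + t)"
  have K0: "K \<ge> 0" unfolding K_def using sigma t0 by simp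
  have lam2: "lam / 2 = sqrt 2 / (sqrt (real n) * sqrt (real q)) * (1 + t / sqrt (real q))"
    unfolding lam_def t_def c_ab[unfolded c_def] by (simp add: real_sqrt_divide)
  have incl: "E \<in> TS" if E: "E \<in> space M" "E \<notin> L" "E \<notin> U" "\<forall>j<p. E \<notin> B j" for E
  proof -
    define F where "F = fro_norm n q E"
    have F0: "F \<ge> 0" unfolding F_def fro_norm_def by (simp add: sum_nonneg)
    have hL: "real n * real q * \<sigma>^2 / 2 < F^2" using E unfolding L_def F_def by auto
    have hU: "F^2 < 4 * (real n * real q) * \<sigma>^2" using E unfolding U_def F_def by auto
    have s1: "\<sigma> / sqrt 2 < F / c"
    proof (rule power2_less_imp_less)
      have "(\<sigma> / sqrt 2)^2 = \<sigma>^2 / 2" by (simp add: power_divide)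
      also have "\<dots> < F^2 / c^2" unfolding c2 using hL n q by (simp add: field_simps)
      also have "\<dots> = (F / c)^2" by (simp add: power_divide)
      finally show "(\<sigma> / sqrt 2)^2 < (F / c)^2" .
      show "0 \<le> F / c" using F0 c0 by simp
    qed
    have s2: "F / c < 2 * \<sigma>"
    proof (rule power2_less_imp_less)
      have "(F / c)^2 = F^2 / c^2" by (simp add: power_divide)
      also have "\<dots> < (2 * \<sigma>)^2" unfolding c2 using hU n q by (simp add: field_simps)
      finally show "(F / c)^2 < (2 * \<sigma>)^2" .
      show "0 \<le> 2 * \<sigma>" using sigma by simp
    qed
    have each: "sqrt (\<Sum>k<q. (XtE n X E j k)^2) \<le> K" if j: "j < p" for j
    proof -
      have "(\<Sum>k<q. (XtE n X E j k)^2) < real n * \<sigma>^2 * (sqrt (real q) + t)^2"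
        using E(1,4) j unfolding B_def XtE_def by auto
      then have "sqrt (\<Sum>k<q. (XtE n X E j k)^2) \<le> sqrt (real n * \<sigma>^2 * (sqrt (real q) + t)^2)"
        by simp
      also have "\<dots> = K" unfolding K_def using sigma t0
        by (simp add: real_sqrt_mult)
      finally show "sqrt (\<Sum>k<q. (XtE n X E j k)^2) \<le> K" .
    qed
    have N2: "norm_2inf p q (XtE n X E) \<le> K"
      unfolding norm_2inf_def using each p by (subst Max_le_iff) (auto simp: lessThan_empty_iff)
    have Fgt: "\<sigma> * c / sqrt 2 < F" using s1 c0 by (simp add: field_simps)
    have pos1: "0 < c * (\<sigma> * c / sqrt 2)" using c0 sigma by simp
    have "norm_2inf p q (XtE n X E) / (c * F) \<le> K / (c * F)"
      using N2 c0 F0 by (intro divide_right_mono) auto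
    also have "\<dots> \<le> K / (c * (\<sigma> * c / sqrt 2))"
    proof -
      have le: "c * (\<sigma> * c / sqrt 2) \<le> c * F" using Fgt c0 by (intro mult_left_mono) auto
      have cF: "0 < c * F" using pos1 le by linarith
      show ?thesis by (rule divide_left_mono[OF le K0]) (rule mult_pos_pos[OF cF pos1])
    qed
    also have "\<dots> = lam / 2"
      unfolding lam2 K_def c_ab using sigma n q
      by (subst alg_id) (auto simp: mult.assoc)
    finally have s3: "norm_2inf p q (XtE n X E) / (c * F) \<le> lam / 2" .
    show ?thesis unfolding TS_def using E(1) s1 s2 s3 unfolding F_def c_def by auto
  qed
  define R where "R = L \<union> U \<union> (\<Union>j<p. B j)"
  have Rm: "R \<in> sets M" unfolding R_def using Lm Um Bm by auto
  have "1 = measure M (space M)" by (simp add: P.prob_space)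
  also have "\<dots> \<le> measure M (TS \<union> R)"
    using incl TSm Rm unfolding R_def by (intro P.finite_measure_mono) auto
  also have "\<dots> \<le> measure M TS + measure M R"
    using TSm Rm by (rule measure_Un_le)
  finally have one: "1 \<le> measure M TS + measure M R" .
  have "measure M R \<le> measure M (L \<union> U) + measure M (\<Union>j<p. B j)"
    unfolding R_def using Lm Um Bm by (intro measure_Un_le) auto
  also have "\<dots> \<le> (measure M L + measure M U) + (\<Sum>j<p. measure M (B j))"
    using Lm Um Bm by (intro add_mono measure_Un_le P.finite_measure_subadditive_finite) auto
  also have "\<dots> \<le> (exp (-(real (n*q))/24) + exp (-(real (n*q))/24)) + (\<Sum>j<p. exp (-(t^2)/2))"
    using mL mU mB by (intro add_mono sum_mono) auto
  finally have R_le: "measure M R \<le> 2 * exp (-(real (n*q))/24) + real p * exp (-(t^2)/2)" by simp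
  have pw: "real p * exp (-(t^2)/2) = real p powr (1 - A\<^sup>2 / 2)"
  proof -
    have "exp (-(t^2)/2) = real p powr (-(A^2)/2)"
      unfolding t_def using p by (simp add: powr_def power_mult_distrib)
    then have "real p * exp (-(t^2)/2) = real p powr 1 * real p powr (-(A^2)/2)" using p by simp
    also have "\<dots> = real p powr (1 - A\<^sup>2 / 2)" by (simp only: powr_add[symmetric]) (simp add: algebra_simps)
    finally show ?thesis .
  qed
  have e2: "2 * exp (-(real (n*q))/24) \<le> (1 + exp 2) * exp (- (real n * real q) / 24)"
  proof -
    have eq: "exp (- real (n * q) / 24) = exp (- (real n * real q) / 24)" by simp
    have "(1::real) \<le> exp 2" by simp
    then have "(2::real) \<le> 1 + exp 2" by simp
    then show ?thesis unfolding eq by (intro mult_right_mono) auto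
  qed
  have "measure M TS \<ge> 1 - real p powr (1 - A\<^sup>2 / 2) - (1 + exp 2) * exp (- (real n * real q) / 24)"
    using one R_le pw e2 by linarith
  then show ?thesis unfolding TS_def M_def .
qed

end
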